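(* There is an absolute constant $c>0$ such that the following holds. Let $A=\{a_1<\dots<a_k\}$ and $A'=\{a'_1<\dots<a'_k\}$ be sets of real numbers, each with $k$ elements, having distinct pairs of consecutive differences, and let $B,B'$ be arbitrary finite nonempty sets of real numbers. Then \[ |A+B|\cdot|A'+B'|\ge c\left(k^3|B||B'|\right)^{1/2}. \] In particular, if $k=|A|=|A'|=|B|=|B'|$, then $|A+B|\cdot|A'+B'|\ge c\,k^{5/2}$.
   Context: For finite $X,Y\subset\mathbb{R}$, $X+Y=\{x+y:x\in X,y\in Y\}$. For $1\le i\le k-1$ let $d_i=a_{i+1}-a_i$ and $d'_i=a'_{i+1}-a'_i$. The sets $A$ and $A'$ have distinct pairs of consecutive differences if the ordered pairs $(d_i,d'_i)$, $1\le i\le k-1$, are pairwise distinct. *)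

theory Defs
  imports "HOL-Analysis.Analysis"
begin

definition sumset :: "real set \<Rightarrow> real set \<Rightarrow> real set" where
  "sumset X Y = {x + y | x y. x \<in> X \<and> y \<in> Y}"

text \<open>The i-th element (0-based) of a finite real set in increasing order.\<close>
definition elem :: "real set \<Rightarrow> nat \<Rightarrow> real" where
  "elem A i = sorted_list_of_set A ! i"

definition cdiff :: "real set \<Rightarrow> nat \<Rightarrow> real" where
  "cdiff A i = elem A (Suc i) - elem A i"

definition distinct_diff_pairs :: "real set \<Rightarrow> real set \<Rightarrow> bool" where
  "distinct_diff_pairs A A' \<longleftrightarrow>
     inj_on (\<lambda>i. (cdiff A i, cdiff A' i)) {..< card A - 1}"

end

theory Submission
  imports Defs
begin

definition rk :: "real set \<Rightarrow> real \<Rightarrow> nat" where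
  "rk S x = card {s\<in>S. s < x}"

lemma rk_mono: "finite S \<Longrightarrow> x \<le> y \<Longrightarrow> rk S x \<le> rk S y"
  unfolding rk_def by (rule card_mono) auto

lemma rk_le: "finite S \<Longrightarrow> rk S x \<le> card S"
  unfolding rk_def by (rule card_mono) auto

lemma rk_strict: "finite S \<Longrightarrow> x \<in> S \<Longrightarrow> x < y \<Longrightarrow> rk S x < rk S y"
  unfolding rk_def by (rule psubset_card_mono) auto

lemma rk_inj: "finite S \<Longrightarrow> inj_on (rk S) S"
  unfolding inj_on_def
  by (metis linorder_neqE_linordered_idom nat_neq_iff rk_strict)

lemma elem_in: "finite A \<Longrightarrow> i < card A \<Longrightarrow> elem A i \<in> A"
  unfolding elem_def by (metis length_sorted_list_of_set nth_mem set_sorted_list_of_set)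

lemma elem_less: "finite A \<Longrightarrow> i < j \<Longrightarrow> j < card A \<Longrightarrow> elem A i < elem A j"
  unfolding elem_def
  by (metis length_sorted_list_of_set sorted_wrt_nth_less strict_sorted_list_of_set)

lemma sumset_mem: "a \<in> A \<Longrightarrow> b \<in> B \<Longrightarrow> a + b \<in> sumset A B"
  unfolding sumset_def by blast

lemma finite_sumset: "finite A \<Longrightarrow> finite B \<Longrightarrow> finite (sumset A B)"
proof -
  assume "finite A" "finite B"
  have "sumset A B = (\<lambda>p. fst p + snd p) ` (A \<times> B)" unfolding sumset_def by force
  thus ?thesis using \<open>finite A\<close> \<open>finite B\<close> by simp
qed

lemma card_sumset_ge1: "finite A \<Longrightarrow> finite B \<Longrightarrow> a \<in> A \<Longrightarrow> card B \<le> card (sumset A B)"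
proof -
  assume h: "finite A" "finite B" "a \<in> A"
  have "(\<lambda>b. a + b) ` B \<subseteq> sumset A B" using h sumset_mem by blast
  moreover have "card ((\<lambda>b. a + b) ` B) = card B" by (rule card_image) (simp add: inj_on_def)
  ultimately show ?thesis using card_mono finite_sumset h by metis
qed

lemma card_sumset_ge2: "finite A \<Longrightarrow> finite B \<Longrightarrow> b \<in> B \<Longrightarrow> card A \<le> card (sumset A B)"
proof -
  assume h: "finite A" "finite B" "b \<in> B"
  have "(\<lambda>a. a + b) ` A \<subseteq> sumset A B" using h sumset_mem by blast
  moreover have "card ((\<lambda>a. a + b) ` A) = card A" by (rule card_image) (simp add: inj_on_def)
  ultimately show ?thesis using card_mono finite_sumset h by metis
qed

lemma bad_bound:
  fixes f :: "nat \<Rightarrow> real"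
  assumes mono: "\<And>i. i < n \<Longrightarrow> f i \<le> f (Suc i)" and tot: "f n - f 0 \<le> s" and M: "M \<ge> 0"
  shows "real (card {i\<in>{..<n}. f (Suc i) - f i > M}) * M \<le> s"
proof -
  let ?Bad = "{i\<in>{..<n}. f (Suc i) - f i > M}"
  have "real (card ?Bad) * M = (\<Sum>i\<in>?Bad. M)" by simp
  also have "\<dots> \<le> (\<Sum>i\<in>?Bad. f (Suc i) - f i)" by (rule sum_mono) auto
  also have "\<dots> \<le> (\<Sum>i<n. f (Suc i) - f i)"
    by (rule sum_mono2) (auto intro: mono simp: algebra_simps)
  also have "\<dots> = f n - f 0" by (rule sum_lessThan_telescope)
  finally show ?thesis using tot by linarith
qed

lemma pair_bound:
  assumes S: "finite S" and M: "M \<ge> 0"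
  shows "real (card {(x,y). x\<in>S \<and> y\<in>S \<and> rk S x \<le> rk S y \<and> real (rk S y) - real (rk S x) \<le> M})
          \<le> real (card S) * (M + 1)"
proof -
  define Y where "Y x = {y\<in>S. rk S x \<le> rk S y \<and> real (rk S y) - real (rk S x) \<le> M}" for x
  have eq: "{(x,y). x\<in>S \<and> y\<in>S \<and> rk S x \<le> rk S y \<and> real (rk S y) - real (rk S x) \<le> M}
            = Sigma S Y" unfolding Y_def by auto
  have cY: "card (Y x) \<le> nat \<lfloor>M\<rfloor> + 1" for x
  proof -
    have sub: "rk S ` Y x \<subseteq> {rk S x .. rk S x + nat \<lfloor>M\<rfloor>}"
    proof
      fix r assume "r \<in> rk S ` Y x"
      then obtain y where y: "y \<in> Y x" "r = rk S y" by auto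
      hence "rk S x \<le> r" "real r - real (rk S x) \<le> M" unfolding Y_def by auto
      hence "int r - int (rk S x) \<le> \<lfloor>M\<rfloor>" by (simp add: le_floor_iff)
      thus "r \<in> {rk S x .. rk S x + nat \<lfloor>M\<rfloor>}" using \<open>rk S x \<le> r\<close> by auto
    qed
    have "card (rk S ` Y x) \<le> nat \<lfloor>M\<rfloor> + 1"
    proof -
      have "card (rk S ` Y x) \<le> card {rk S x .. rk S x + nat \<lfloor>M\<rfloor>}"
        by (rule card_mono) (use sub in auto)
      thus ?thesis by simp
    qed
    moreover have "inj_on (rk S) (Y x)" using rk_inj[OF S] unfolding Y_def
      by (rule inj_on_subset) auto
    ultimately show ?thesis by (simp add: card_image)
  qed
  have "card (Sigma S Y) = (\<Sum>x\<in>S. card (Y x))" using S unfolding Y_def by simp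
  also have "\<dots> \<le> (\<Sum>x\<in>S. nat \<lfloor>M\<rfloor> + 1)" by (rule sum_mono) (rule cY)
  also have "\<dots> = card S * (nat \<lfloor>M\<rfloor> + 1)" by simp
  finally have "real (card (Sigma S Y)) \<le> real (card S) * (real (nat \<lfloor>M\<rfloor>) + 1)"
    by (metis of_nat_1 of_nat_add of_nat_le_iff of_nat_mult)
  also have "\<dots> \<le> real (card S) * (M + 1)"
    using M by (intro mult_left_mono) auto
  finally show ?thesis using eq by simp
qed


lemma main_bound:
  assumes fA: "finite A" and fA': "finite A'" and cA: "card A = k" and cA': "card A' = k"
    and dd: "distinct_diff_pairs A A'"
    and fB: "finite B" and nB: "B \<noteq> {}" and fB': "finite B'" and nB': "B' \<noteq> {}"
    and k4: "k \<ge> 4"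
  shows "real k ^ 3 * real (card B) * real (card B')
         \<le> 100 * (real (card (sumset A B)) * real (card (sumset A' B'))) ^ 2"
proof -
  define S where "S = sumset A B"
  define S' where "S' = sumset A' B'"
  define s where "s = real (card S)"
  define s' where "s' = real (card S')"
  have fS: "finite S" and fS': "finite S'" using finite_sumset fA fB fA' fB' S_def S'_def by auto
  obtain b0 where b0: "b0 \<in> B" using nB by auto
  obtain b0' where b0': "b0' \<in> B'" using nB' by auto
  have sk: "s \<ge> real k" using card_sumset_ge2[OF fA fB b0] cA unfolding s_def S_def by simp
  have sk': "s' \<ge> real k" using card_sumset_ge2[OF fA' fB' b0'] cA' unfolding s'_def S'_def by simp
  have kpos: "real k > 0" using k4 by simp
  define M where "M = 4 * s / real k"
  define M' where "M' = 4 * s' / real k"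
  have M0: "M \<ge> 4" using sk kpos unfolding M_def by (simp add: field_simps)
  have M0': "M' \<ge> 4" using sk' kpos unfolding M'_def by (simp add: field_simps)
  define m where "m b i = real (rk S (elem A (Suc i) + b)) - real (rk S (elem A i + b))" for b i
  define m' where "m' b i = real (rk S' (elem A' (Suc i) + b)) - real (rk S' (elem A' i + b))" for b i
  define G where "G b b' = {i\<in>{..<k-1}. m b i \<le> M \<and> m' b' i \<le> M'}" for b b'
  define T where "T = Sigma (B \<times> B') (\<lambda>p. G (fst p) (snd p))"
  define PS where "PS = {(x,y). x\<in>S \<and> y\<in>S \<and> rk S x \<le> rk S y \<and> real (rk S y) - real (rk S x) \<le> M}"
  define PS' where "PS' = {(x,y). x\<in>S' \<and> y\<in>S' \<and> rk S' x \<le> rk S' y \<and> real (rk S' y) - real (rk S' x) \<le> M'}"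
  define f where "f q = (case q of (p, i) \<Rightarrow>
     ((elem A i + fst p, elem A (Suc i) + fst p), (elem A' i + snd p, elem A' (Suc i) + snd p)))" for q
  have bad: "real (card {i\<in>{..<k-1}. m b i > M}) \<le> real k / 4" if "b \<in> B" for b
  proof -
    have "real (card {i\<in>{..<k-1}. (\<lambda>j. real (rk S (elem A j + b))) (Suc i) - (\<lambda>j. real (rk S (elem A j + b))) i > M}) * M \<le> s"
    proof (rule bad_bound)
      fix i assume "i < k - 1"
      hence "elem A i < elem A (Suc i)" using elem_less[OF fA, of i "Suc i"] cA by simp
      thus "real (rk S (elem A i + b)) \<le> real (rk S (elem A (Suc i) + b))"
        using rk_mono[OF fS] by simp
    next
      show "real (rk S (elem A (k - 1) + b)) - real (rk S (elem A 0 + b)) \<le> s"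
        using rk_le[OF fS] unfolding s_def by (smt (verit) of_nat_0_le_iff of_nat_le_iff)
    next
      show "0 \<le> M" using M0 by simp
    qed
    hence "real (card {i\<in>{..<k-1}. m b i > M}) * M \<le> s" unfolding m_def by simp
    hence "real (card {i\<in>{..<k-1}. m b i > M}) \<le> s / M" using M0 by (simp add: field_simps)
    also have "s / M = real k / 4" unfolding M_def using sk kpos by (simp add: field_simps)
    finally show ?thesis .
  qed
  have bad': "real (card {i\<in>{..<k-1}. m' b i > M'}) \<le> real k / 4" if "b \<in> B'" for b
  proof -
    have "real (card {i\<in>{..<k-1}. (\<lambda>j. real (rk S' (elem A' j + b))) (Suc i) - (\<lambda>j. real (rk S' (elem A' j + b))) i > M'}) * M' \<le> s'"
    proof (rule bad_bound)
      fix i assume "i < k - 1"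
      hence "elem A' i < elem A' (Suc i)" using elem_less[OF fA', of i "Suc i"] cA' by simp
      thus "real (rk S' (elem A' i + b)) \<le> real (rk S' (elem A' (Suc i) + b))"
        using rk_mono[OF fS'] by simp
    next
      show "real (rk S' (elem A' (k - 1) + b)) - real (rk S' (elem A' 0 + b)) \<le> s'"
        using rk_le[OF fS'] unfolding s'_def by (smt (verit) of_nat_0_le_iff of_nat_le_iff)
    next
      show "0 \<le> M'" using M0' by simp
    qed
    hence "real (card {i\<in>{..<k-1}. m' b i > M'}) * M' \<le> s'" unfolding m'_def by simp
    hence "real (card {i\<in>{..<k-1}. m' b i > M'}) \<le> s' / M'" using M0' by (simp add: field_simps)
    also have "s' / M' = real k / 4" unfolding M'_def using sk' kpos by (simp add: field_simps)
    finally show ?thesis .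
  qed
  have good: "real (card (G b b')) \<ge> real k / 4" if "b \<in> B" "b' \<in> B'" for b b'
  proof -
    have "{..<k-1} \<subseteq> G b b' \<union> {i\<in>{..<k-1}. m b i > M} \<union> {i\<in>{..<k-1}. m' b' i > M'}"
      unfolding G_def by auto
    hence "card {..<k-1} \<le> card (G b b' \<union> {i\<in>{..<k-1}. m b i > M} \<union> {i\<in>{..<k-1}. m' b' i > M'})"
      by (intro card_mono) (auto simp: G_def)
    also have "\<dots> \<le> card (G b b') + card {i\<in>{..<k-1}. m b i > M} + card {i\<in>{..<k-1}. m' b' i > M'}"
      using card_Un_le[of "G b b' \<union> {i\<in>{..<k-1}. m b i > M}" "{i\<in>{..<k-1}. m' b' i > M'}"]
            card_Un_le[of "G b b'" "{i\<in>{..<k-1}. m b i > M}"] by linarith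
    finally have "k - 1 \<le> card (G b b') + card {i\<in>{..<k-1}. m b i > M} + card {i\<in>{..<k-1}. m' b' i > M'}"
      by simp
    hence "real (k - 1) \<le> real (card (G b b')) + real (card {i\<in>{..<k-1}. m b i > M}) + real (card {i\<in>{..<k-1}. m' b' i > M'})"
      by linarith
    moreover have "real (k - 1) = real k - 1" using k4 by simp
    ultimately show ?thesis using bad[OF that(1)] bad'[OF that(2)] k4 by linarith
  qed
  have cardT: "real (card T) \<ge> real (card B) * real (card B') * (real k / 4)"
  proof -
    have "card T = (\<Sum>p\<in>B \<times> B'. card (G (fst p) (snd p)))"
      unfolding T_def using fB fB' by (subst card_SigmaI) (auto simp: G_def)
    hence "real (card T) = (\<Sum>p\<in>B \<times> B'. real (card (G (fst p) (snd p))))" by simp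
    also have "\<dots> \<ge> (\<Sum>p\<in>B \<times> B'. real k / 4)"
      by (rule sum_mono) (use good in \<open>auto simp: mem_Times_iff\<close>)
    finally show ?thesis using card_cartesian_product by (simp add: card_cartesian_product)
  qed
  have img: "f ` T \<subseteq> PS \<times> PS'"
  proof
    fix z assume "z \<in> f ` T"
    then obtain b b' i where z: "z = f ((b,b'), i)" and b: "b \<in> B" "b' \<in> B'" and i: "i \<in> G b b'"
      unfolding T_def by auto
    have ik: "i < k" "Suc i < k" using i unfolding G_def by auto
    have mem: "elem A i + b \<in> S" "elem A (Suc i) + b \<in> S"
              "elem A' i + b' \<in> S'" "elem A' (Suc i) + b' \<in> S'"
      using ik elem_in fA fA' cA cA' b sumset_mem unfolding S_def S'_def by auto
    have lt: "elem A i < elem A (Suc i)" "elem A' i < elem A' (Suc i)"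
      using elem_less fA fA' cA cA' ik by auto
    have "rk S (elem A i + b) \<le> rk S (elem A (Suc i) + b)"
         "rk S' (elem A' i + b') \<le> rk S' (elem A' (Suc i) + b')"
      using lt rk_mono fS fS' by auto
    moreover have "m b i \<le> M" "m' b' i \<le> M'" using i unfolding G_def by auto
    ultimately show "z \<in> PS \<times> PS'"
      using mem unfolding z f_def PS_def PS'_def m_def m'_def by auto
  qed
  have inj: "inj_on f T"
  proof (rule inj_onI)
    fix z w assume z: "z \<in> T" and w: "w \<in> T" and eq: "f z = f w"
    obtain b b' i where zz: "z = ((b,b'), i)" and iz: "i < k - 1" using z unfolding T_def G_def by auto
    obtain c c' j where ww: "w = ((c,c'), j)" and jw: "j < k - 1" using w unfolding T_def G_def by auto
    have e: "elem A i + b = elem A j + c" "elem A (Suc i) + b = elem A (Suc j) + c"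
      "elem A' i + b' = elem A' j + c'" "elem A' (Suc i) + b' = elem A' (Suc j) + c'"
      using eq unfolding zz ww f_def by auto
    have "(cdiff A i, cdiff A' i) = (cdiff A j, cdiff A' j)"
      unfolding cdiff_def using e by (simp add: algebra_simps) linarith?
    hence "i = j" using dd iz jw cA unfolding distinct_diff_pairs_def inj_on_def by auto
    thus "z = w" using e unfolding zz ww by auto
  qed
  have "card T \<le> card (PS \<times> PS')"
  proof -
    have "finite (PS \<times> PS')"
    proof -
      have "PS \<subseteq> S \<times> S" "PS' \<subseteq> S' \<times> S'" unfolding PS_def PS'_def by auto
      thus ?thesis using fS fS' finite_subset by blast
    qed
    thus ?thesis using card_inj_on_le[OF inj img] by simp
  qed
  hence "real (card T) \<le> real (card PS) * real (card PS')"
    by (metis card_cartesian_product of_nat_le_iff of_nat_mult)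
  also have "\<dots> \<le> (s * (M + 1)) * (s' * (M' + 1))"
    using pair_bound[OF fS, of M] pair_bound[OF fS', of M'] M0 M0'
    unfolding PS_def PS'_def s_def s'_def by (intro mult_mono) auto
  finally have T1: "real (card B) * real (card B') * (real k / 4) \<le> (s * (M + 1)) * (s' * (M' + 1))"
    using cardT by linarith
  have "M + 1 \<le> 5 * s / real k" "M' + 1 \<le> 5 * s' / real k"
    using sk sk' kpos unfolding M_def M'_def by (simp_all add: field_simps)
  hence Y: "(s * (M + 1)) * (s' * (M' + 1)) \<le> (s * (5 * s / real k)) * (s' * (5 * s' / real k))"
    using sk sk' kpos M0 M0' by (intro mult_mono) auto
  have "real (card B) * real (card B') * (real k / 4) \<le> 25 * (s * s') ^ 2 / (real k)^2"
  proof -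
    have "(s * (5 * s / real k)) * (s' * (5 * s' / real k)) = 25 * (s * s') ^ 2 / (real k)^2"
      by (simp add: power2_eq_square field_simps)
    thus ?thesis using T1 Y by linarith
  qed
  hence "real (card B) * real (card B') * (real k / 4) * (real k)^2 \<le> 25 * (s * s') ^ 2"
    using kpos by (simp add: field_simps)
  thus ?thesis unfolding s_def s'_def S_def S'_def by (simp add: power2_eq_square power3_eq_cube algebra_simps)
qed


theorem theorem3:
  shows "\<exists>c::real. c > 0 \<and>
    (\<forall>(A::real set) (A'::real set) (B::real set) (B'::real set) (k::nat).
       finite A \<longrightarrow> finite A' \<longrightarrow> card A = k \<longrightarrow> card A' = k \<longrightarrow>
       distinct_diff_pairs A A' \<longrightarrow>
       finite B \<longrightarrow> B \<noteq> {} \<longrightarrow> finite B' \<longrightarrow> B' \<noteq> {} \<longrightarrow>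
       real (card (sumset A B)) * real (card (sumset A' B'))
         \<ge> c * sqrt (real k ^ 3 * real (card B) * real (card B')))"
proof (intro exI[of _ "1/10"] conjI allI impI)
  show "(0::real) < 1/10" by simp
  fix A A' B B' :: "real set" and k :: nat
  assume fA: "finite A" and fA': "finite A'" and cA: "card A = k" and cA': "card A' = k"
    and dd: "distinct_diff_pairs A A'"
    and fB: "finite B" and nB: "B \<noteq> {}" and fB': "finite B'" and nB': "B' \<noteq> {}"
  define P where "P = real (card (sumset A B)) * real (card (sumset A' B'))"
  define X where "X = real k ^ 3 * real (card B) * real (card B')"
  have P0: "P \<ge> 0" unfolding P_def by simp
  have key: "X \<le> 100 * P ^ 2"
  proof (cases "k \<ge> 4")
    case True
    show ?thesis using main_bound[OF fA fA' cA cA' dd fB nB fB' nB' True] unfolding X_def P_def .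
  next
    case False
    show ?thesis
    proof (cases "k = 0")
      case True thus ?thesis unfolding X_def using P0 by simp
    next
      case k0: False
      obtain a where a: "a \<in> A" using k0 cA by fastforce
      obtain a' where a': "a' \<in> A'" using k0 cA' by fastforce
      have s1: "real (card B) \<le> real (card (sumset A B))" using card_sumset_ge1[OF fA fB a] by simp
      have s2: "real (card B') \<le> real (card (sumset A' B'))" using card_sumset_ge1[OF fA' fB' a'] by simp
      have b1: "real (card B) \<ge> 1" using fB nB by (simp add: Suc_leI card_gt_0_iff)
      have b2: "real (card B') \<ge> 1" using fB' nB' by (simp add: Suc_leI card_gt_0_iff)
      define u where "u = real (card B) * real (card B')"
      have u1: "u \<ge> 1" unfolding u_def using b1 b2 by (metis mult_mono' mult_1 zero_le_one)
      have uP: "u \<le> P" unfolding u_def P_def using s1 s2 b1 b2 by (intro mult_mono) auto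
      have "real k \<le> 3" using False by simp
      hence k3: "real k ^ 3 \<le> 3 ^ 3" by (intro power_mono) auto
      have "X = real k ^ 3 * u" unfolding X_def u_def by (simp add: mult.assoc)
      also have "\<dots> \<le> 27 * u" using mult_right_mono[OF k3, of u] u1 by simp
      also have "\<dots> \<le> 100 * (u * u)" using mult_left_mono[OF u1, of u] u1 by simp
      also have "\<dots> \<le> 100 * P ^ 2"
      proof -
        have "u * u \<le> P * P" using uP u1 by (intro mult_mono) auto
        thus ?thesis by (simp add: power2_eq_square)
      qed
      finally show ?thesis .
    qed
  qed
  have "sqrt X \<le> sqrt (100 * P ^ 2)" using key by simp
  also have "sqrt (100 * P ^ 2) = 10 * P" using P0 by (simp add: real_sqrt_mult)
  finally show "1/10 * sqrt (real k ^ 3 * real (card B) * real (card B')) \<le>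
       real (card (sumset A B)) * real (card (sumset A' B'))" unfolding X_def P_def by simp
qed

end
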